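(* Let $B \ge 1$ and let $|B| \ge 2$ be an even integer. Consider the busNNN architecture with $B$ buses, each attached to $|B|$ qubits, described in the context, with its $2B$ columns $0,1,\dots,2B-1$. Apply the following alternating sequence of swap layers, starting from the initial placement (time $0$): layer type $\mathcal{S}_0$, then $\mathcal{S}_1$, then $\mathcal{S}_0$, then $\mathcal{S}_1$, and so on, where - $\mathcal{S}_0$ (inter-bus layer) swaps, position-wise, the contents of column $2i+1$ with the contents of column $2i+2$ for every $i = 0,\dots,B-2$ (i.e. it swaps the qubit states across every point-to-point inter-bus edge); - $\mathcal{S}_1$ (intra-bus layer) swaps, position-wise, the contents of column $2i$ with the contents of column $2i+1$ for every $i = 0,\dots,B-2$ (i.e. on every bus except the last, $(B-1)$-th, bus). Say that full connectivity is reached after $L$ layers if for every pair of distinct logical qubits there is a time $t \in \{0,1,\dots,L\}$ (time $t$ being the placement after the first $t$ layers) at which the two qubits sit on qubit positions attached to a common bus. Then the smallest $L$ for which full connectivity is reached is exactly $$(4B-5)\left\lceil \frac{B}{B+1} \right\rceil,$$ i.e. $0$ if $B=1$ and $4B-5$ if $B \ge 2$.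
   Context: The busNNN ("bus next-nearest neighbor") architecture with $B$ buses and bus size $|B|$ (an even integer) has $n = B|B|$ physical qubit positions. A bus is a hardware element attached to $|B|$ qubit positions that can apply a two-qubit gate between any two of the qubit positions attached to it. The $|B|$ positions attached to bus $i$ ($i = 0,\dots,B-1$) are split into two "columns" (half-buses) of $|B|/2$ positions each, labeled column $2i$ and column $2i+1$; within each column the positions are indexed $k = 0,\dots,|B|/2-1$. Adjacent buses are connected by point-to-point edges: for each $i = 0,\dots,B-2$ and each $k$, position $k$ of column $2i+1$ is coupled to position $k$ of column $2i+2$. A swap layer is a set of simultaneous SWAP operations on disjoint pairs of positions; "swapping column $a$ with column $b$ position-wise" means swapping, for every $k$, the state at position $k$ of column $a$ with the state at position $k$ of column $b$. Logical qubits are initially placed one per position. *)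

theory Defs
  imports Complex_Main
begin

text \<open>A qubit position is a pair (column, index within column).
  Column c belongs to bus c div 2. Bus size s = |B|, so each column has s div 2 positions.\<close>

type_synonym pos = "nat \<times> nat"

definition positions :: "nat \<Rightarrow> nat \<Rightarrow> pos set" where
  "positions B s = {(c, k). c < 2 * B \<and> k < s div 2}"

definition bus_of :: "pos \<Rightarrow> nat" where
  "bus_of p = fst p div 2"

definition S0 :: "nat \<Rightarrow> pos \<Rightarrow> pos" where
  "S0 B p = (case p of (c, k) \<Rightarrow>
     if (\<exists>i. i + 2 \<le> B \<and> c = 2 * i + 1) then (c + 1, k)
     else if (\<exists>i. i + 2 \<le> B \<and> c = 2 * i + 2) then (c - 1, k)
     else (c, k))"

definition S1 :: "nat \<Rightarrow> pos \<Rightarrow> pos" where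
  "S1 B p = (case p of (c, k) \<Rightarrow>
     if (\<exists>i. i + 2 \<le> B \<and> c = 2 * i) then (c + 1, k)
     else if (\<exists>i. i + 2 \<le> B \<and> c = 2 * i + 1) then (c - 1, k)
     else (c, k))"

definition layer :: "nat \<Rightarrow> nat \<Rightarrow> pos \<Rightarrow> pos" where
  "layer B t = (if even t then S0 B else S1 B)"

text \<open>placement B t p = the logical qubit at position p after the first t layers.
  Logical qubits are labelled by their initial position.\<close>
fun placement :: "nat \<Rightarrow> nat \<Rightarrow> pos \<Rightarrow> pos" where
  "placement B 0 = id"
| "placement B (Suc t) = placement B t \<circ> layer B t"

definition share_bus_at :: "nat \<Rightarrow> nat \<Rightarrow> nat \<Rightarrow> pos \<Rightarrow> pos \<Rightarrow> bool" where
  "share_bus_at B s t q1 q2 =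
     (\<exists>p1\<in>positions B s. \<exists>p2\<in>positions B s.
        placement B t p1 = q1 \<and> placement B t p2 = q2 \<and> bus_of p1 = bus_of p2)"

definition full_connectivity :: "nat \<Rightarrow> nat \<Rightarrow> nat \<Rightarrow> bool" where
  "full_connectivity B s L =
     (\<forall>q1\<in>positions B s. \<forall>q2\<in>positions B s. q1 \<noteq> q2 \<longrightarrow>
        (\<exists>t\<le>L. share_bus_at B s t q1 q2))"

end

theory Submission imports Defs begin

definition u0 :: "nat \<Rightarrow> nat \<Rightarrow> nat" where
  "u0 B c = (if odd c then c else 4*B-3-c)"
definition vv :: "nat \<Rightarrow> nat \<Rightarrow> nat \<Rightarrow> nat" where
  "vv B u t = (if u + t < 4*B-2 then u+t else u+t-(4*B-2))"
definition colv :: "nat \<Rightarrow> nat \<Rightarrow> nat" where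
  "colv B v = (if v < 2*B-1 then v else 4*B-3-v)"
definition colf :: "nat \<Rightarrow> nat \<Rightarrow> nat \<Rightarrow> nat" where
  "colf B c t = (if 2*B-1 \<le> c then c else colv B (vv B (u0 B c) t))"

lemma S0_simp: "S0 B (c,k) = ((if odd c \<and> c+3 \<le> 2*B then c+1 else if even c \<and> 2 \<le> c \<and> c+2 \<le> 2*B then c-1 else c), k)"
  unfolding S0_def by (auto; presburger)

lemma S1_simp: "S1 B (c,k) = ((if even c \<and> c+4 \<le> 2*B then c+1 else if odd c \<and> c+3 \<le> 2*B then c-1 else c), k)"
  unfolding S1_def by (auto; presburger)

lemma layer_invol: "layer B t (layer B t p) = p"
  by (cases p) (auto simp: layer_def S0_simp S1_simp; presburger)

lemma stepv0: "B \<ge> 1 \<Longrightarrow> v < 4*B-2 \<Longrightarrow> odd v \<Longrightarrow>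
   S0 B (colv B v, k) = (colv B (if v+1 < 4*B-2 then v+1 else 0), k)"
  unfolding colv_def S0_simp by (auto; presburger)

lemma stepv1: "B \<ge> 1 \<Longrightarrow> v < 4*B-2 \<Longrightarrow> even v \<Longrightarrow>
   S1 B (colv B v, k) = (colv B (if v+1 < 4*B-2 then v+1 else 0), k)"
  unfolding colv_def S1_simp by (auto; presburger)

lemma u0_props: "c < 2*B-1 \<Longrightarrow> odd (u0 B c) \<and> u0 B c < 4*B-2"
  unfolding u0_def by (auto; presburger)

lemma vv_props: "u < 4*B-2 \<Longrightarrow> t < 4*B-2 \<Longrightarrow>
   vv B u t < 4*B-2 \<and> vv B u (Suc t) = (if vv B u t + 1 < 4*B-2 then vv B u t + 1 else 0)
   \<and> (even (vv B u t) \<longleftrightarrow> even (u + t))"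
  unfolding vv_def by (auto; presburger)

lemma step: "t < 4*B-2 \<Longrightarrow> layer B t (colf B c t, k) = (colf B c (Suc t), k)"
proof (cases "2*B-1 \<le> c")
  case True then show ?thesis unfolding colf_def layer_def by (auto simp: S0_simp S1_simp)
next
  case False
  then have B: "B \<ge> 1" by auto
  from u0_props[OF _] False have u: "odd (u0 B c)" "u0 B c < 4*B-2" by auto
  assume t: "t < 4*B-2"
  note vp = vv_props[OF u(2) t]
  show ?thesis
  proof (cases "even t")
    case True
    then have "odd (vv B (u0 B c) t)" using vp u by auto
    then show ?thesis using stepv0[OF B, of "vv B (u0 B c) t" k] vp False True
      unfolding colf_def layer_def by auto
  next
    case F: False
    then have "even (vv B (u0 B c) t)" using vp u by auto
    then show ?thesis using stepv1[OF B, of "vv B (u0 B c) t" k] vp False F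
      unfolding colf_def layer_def by auto
  qed
qed

lemma colf0: "colf B c 0 = c"
  unfolding colf_def colv_def vv_def u0_def by (auto; presburger)

lemma placement_colf: "t \<le> 4*B-2 \<Longrightarrow> placement B t (colf B c t, k) = (c, k)"
proof (induction t)
  case 0 then show ?case by (simp add: colf0)
next
  case (Suc t)
  have "layer B t (colf B c (Suc t), k) = (colf B c t, k)"
    using step[of t B c k] layer_invol[of B t] Suc.prems by (metis Suc_le_eq)
  then show ?case using Suc by simp
qed

lemma inj_layer: "inj (layer B t)"
  by (metis injI layer_invol)

lemma inj_placement: "inj (placement B t)"
proof (induction t)
  case (Suc t) then show ?case using inj_compose[OF Suc inj_layer[of B t]] by (simp only: placement.simps)
qed simp

lemma colf_lt: "c < 2*B \<Longrightarrow> colf B c t < 2*B"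
  unfolding colf_def colv_def by auto

lemma share_iff:
  assumes "t \<le> 4*B-2" "(c1,k1) \<in> positions B s" "(c2,k2) \<in> positions B s"
  shows "share_bus_at B s t (c1,k1) (c2,k2) \<longleftrightarrow> colf B c1 t div 2 = colf B c2 t div 2"
proof
  assume "share_bus_at B s t (c1,k1) (c2,k2)"
  then obtain p1 p2 where "placement B t p1 = (c1,k1)" "placement B t p2 = (c2,k2)" "bus_of p1 = bus_of p2"
    unfolding share_bus_at_def by auto
  moreover have "p1 = (colf B c1 t, k1)" "p2 = (colf B c2 t, k2)"
    using calculation placement_colf[OF assms(1)] inj_placement[of B t] by (metis injD)+
  ultimately show "colf B c1 t div 2 = colf B c2 t div 2" by (simp add: bus_of_def)
next
  assume "colf B c1 t div 2 = colf B c2 t div 2"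
  moreover have "(colf B c1 t, k1) \<in> positions B s" "(colf B c2 t, k2) \<in> positions B s"
    using assms colf_lt by (auto simp: positions_def)
  ultimately show "share_bus_at B s t (c1,k1) (c2,k2)"
    unfolding share_bus_at_def using placement_colf[OF assms(1)]
    by (metis bus_of_def fst_conv)
qed

lemma meet_fixed: "B \<ge> 2 \<Longrightarrow> odd u \<Longrightarrow> u < 4*B-2 \<Longrightarrow> \<exists>t\<le>4*B-5. colv B (vv B u t) = 2*B-2"
proof (cases "u \<le> 2*B-1")
  case True
  assume "B \<ge> 2" "odd u" "u < 4*B-2"
  then show ?thesis using True
    by (intro exI[of _ "2*B-1-u"]) (auto simp: vv_def colv_def)
next
  case False
  assume a: "B \<ge> 2" "odd u" "u < 4*B-2"
  then have "u \<ge> 2*B+1" using False by presburger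
  then show ?thesis using a False
    by (intro exI[of _ "6*B-4-u"]) (auto simp: vv_def colv_def)
qed

lemma meet_caseA:
  assumes "B \<ge> 2" "odd u" "u < 4*B-2" "even r" "r \<le> 2*B-3" "r < w" "w < 4*B-2" "r + w + 2 = 4*B-2"
    "p < 4*B-2" "p = u + (w - r) \<or> p + (4*B-2) = u + (w - r)"
  shows "\<exists>t\<le>4*B-5. colv B (vv B u t) div 2 = colv B (vv B p t) div 2"
proof -
  have cr: "colv B r = r" using assms(1,5) unfolding colv_def by (auto; arith)
  have cw: "colv B w = r + 1" using assms(1,5,8) unfolding colv_def by (auto; arith)
  have ev: "r div 2 = (r + 1) div 2" using assms(1,4) by presburger
  show ?thesis
  proof (cases "r \<ge> u")
    case True
    have t: "r - u \<le> 4*B-5" using assms(1,5) by arith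
    have a: "vv B u (r - u) = r" using True assms(5) unfolding vv_def by (auto; arith)
    have b: "vv B p (r - u) = w" using True assms(5,6,7,10) unfolding vv_def by (auto; arith)
    show ?thesis using t a b cr cw ev by (intro exI[of _ "r - u"]) simp
  next
    case False
    show ?thesis
    proof (cases "r + 4*B-2 - u \<le> 4*B-5")
      case True
      have a: "vv B u (r + 4*B-2 - u) = r" using False assms(3) unfolding vv_def by (auto; arith)
      have b: "vv B p (r + 4*B-2 - u) = w" using False assms(3,6,7,9,10) unfolding vv_def by (auto; arith)
      show ?thesis using True a b cr cw ev by (intro exI[of _ "r + 4*B-2 - u"]) simp
    next
      case F2: False
      then have ru: "u = r + 1" using assms(1,2,4) False by presburger
      then have p: "p = w + 1" using assms(1,6,7,8,9,10) by (elim disjE; arith)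
      have "vv B u 0 = u" "vv B p 0 = p" using assms(3,9) unfolding vv_def by auto
      then have a: "vv B u 0 = r + 1" "vv B p 0 = w + 1" using ru p by auto
      have "r + 1 < 2*B-1" "\<not> w + 1 < 2*B-1" "4*B-3-(w+1) = r" using assms(1,5,8) by arith+
      then have "colv B (r+1) = r + 1" "colv B (w+1) = r" unfolding colv_def by auto
      then show ?thesis using a ev by (intro exI[of _ 0]) simp
    qed
  qed
qed

lemma meet_moving:
  assumes "B \<ge> 2" "odd ua" "odd ub" "ua < ub" "ub < 4*B-2"
  shows "\<exists>t\<le>4*B-5. colv B (vv B ua t) div 2 = colv B (vv B ub t) div 2"
proof -
  have "even (ub - ua)" using assms(2,3,4) by presburger
  then obtain k where k: "ub - ua = 2*k" by blast
  have k1: "k \<ge> 1" "2*k \<le> 4*B-4" using k assms(2,3,4,5) by presburger+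
  show ?thesis
  proof (cases "even k")
    case True
    then obtain j where j: "k = 2*j" by blast
    define r where "r = 2*B-2 - k"
    have f1: "even r" unfolding r_def using j assms(1) by presburger
    have f2: "r \<le> 2*B-3" "r < r + (ub - ua)" "r + (ub - ua) < 4*B-2" "r + (r + (ub-ua)) + 2 = 4*B-2"
      using k k1 assms(1) unfolding r_def by arith+
    have f3: "ua < 4*B-2" using assms(4,5) by arith
    have f4: "ub = ua + (r + (ub - ua) - r) \<or> ub + (4*B-2) = ua + (r + (ub - ua) - r)" using assms(4) by arith
    show ?thesis using meet_caseA[OF assms(1,2) f3 f1 f2 assms(5) f4] .
  next
    case False
    then obtain j where j: "k = 2*j+1" by (metis oddE)
    define r where "r = k - 1"
    have f1: "even r" unfolding r_def using j by simp
    have f2: "r \<le> 2*B-3" "r < r + (4*B-2 - (ub - ua))" "r + (4*B-2 - (ub - ua)) < 4*B-2"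
     "r + (r + (4*B-2 - (ub-ua))) + 2 = 4*B-2"
      using k k1 assms(1) unfolding r_def by arith+
    have f3: "ua < 4*B-2" using assms(4,5) by arith
    have f4: "ua = ub + (r + (4*B-2 - (ub - ua)) - r) \<or> ua + (4*B-2) = ub + (r + (4*B-2 - (ub - ua)) - r)"
      using assms(4,5) by arith
    obtain t where "t \<le> 4*B-5" "colv B (vv B ub t) div 2 = colv B (vv B ua t) div 2"
      using meet_caseA[OF assms(1,3,5) f1 f2 f3 f4] by blast
    then show ?thesis by metis
  qed
qed

lemma colf_fixed: "colf B (2*B-1) t = 2*B-1"
  unfolding colf_def by simp

lemma no_meet:
  assumes "B \<ge> 2" "t \<le> 4*B-6"
  shows "colf B (2*B-4) t div 2 \<noteq> colf B (2*B-1) t div 2"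
proof -
  have "even (2*B-4)" by presburger
  then have u: "u0 B (2*B-4) = 2*B+1" unfolding u0_def using assms(1) by simp
  have "colv B (vv B (2*B+1) t) \<le> 2*B-3"
  proof (cases "2*B+1+t < 4*B-2")
    case True
    then have "vv B (2*B+1) t = 2*B+1+t" unfolding vv_def by simp
    moreover have "\<not> 2*B+1+t < 2*B-1" by arith
    ultimately show ?thesis unfolding colv_def using assms by auto
  next
    case False
    then have "vv B (2*B+1) t = 2*B+1+t-(4*B-2)" unfolding vv_def by simp
    moreover have "2*B+1+t-(4*B-2) \<le> 2*B-3" using assms by arith
    moreover have "2*B+1+t-(4*B-2) < 2*B-1" using assms by arith
    ultimately show ?thesis unfolding colv_def by auto
  qed
  then have "colf B (2*B-4) t \<le> 2*B-3" using u assms(1) unfolding colf_def by auto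
  then have "colf B (2*B-4) t div 2 < B - 1" using assms(1) by arith
  moreover have "colf B (2*B-1) t div 2 = B - 1" unfolding colf_fixed by arith
  ultimately show ?thesis by simp
qed

lemma u0_inj: "c1 < 2*B-1 \<Longrightarrow> c2 < 2*B-1 \<Longrightarrow> u0 B c1 = u0 B c2 \<Longrightarrow> c1 = c2"
  unfolding u0_def by (cases "odd c1"; cases "odd c2"; simp; arith)

lemma full_conn:
  assumes B: "B \<ge> 2"
  shows "full_connectivity B s (4*B-5)"
  unfolding full_connectivity_def
proof (intro ballI impI)
  fix q1 q2 assume q1: "q1 \<in> positions B s" and q2: "q2 \<in> positions B s" and ne: "q1 \<noteq> q2"
  obtain c1 k1 where q1e: "q1 = (c1,k1)" by (cases q1)
  obtain c2 k2 where q2e: "q2 = (c2,k2)" by (cases q2)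
  have c1: "c1 < 2*B" and c2: "c2 < 2*B" using q1 q2 q1e q2e by (auto simp: positions_def)
  have "\<exists>t\<le>4*B-5. colf B c1 t div 2 = colf B c2 t div 2"
  proof -
    consider "c1 = c2" | "c1 = 2*B-1" "c2 < 2*B-1" | "c2 = 2*B-1" "c1 < 2*B-1" | "c1 < 2*B-1" "c2 < 2*B-1" "c1 \<noteq> c2"
      using c1 c2 by linarith
    then show ?thesis
    proof cases
      case 1 then show ?thesis by auto
    next
      case 2
      then obtain t where "t \<le> 4*B-5" "colv B (vv B (u0 B c2) t) = 2*B-2"
        using meet_fixed[OF B] u0_props[of c2 B] by blast
      then show ?thesis using 2 B by (intro exI[of _ t]) (auto simp: colf_def; presburger)
    next
      case 3
      then obtain t where "t \<le> 4*B-5" "colv B (vv B (u0 B c1) t) = 2*B-2"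
        using meet_fixed[OF B] u0_props[of c1 B] by blast
      then show ?thesis using 3 B by (intro exI[of _ t]) (auto simp: colf_def; presburger)
    next
      case 4
      then have ne: "u0 B c1 \<noteq> u0 B c2" using u0_inj by blast
      have p1: "odd (u0 B c1)" "u0 B c1 < 4*B-2" and p2: "odd (u0 B c2)" "u0 B c2 < 4*B-2"
        using u0_props 4 by auto
      show ?thesis
      proof (cases "u0 B c1 < u0 B c2")
        case True
        then show ?thesis using meet_moving[OF B p1(1) p2(1) True p2(2)] 4 by (auto simp: colf_def)
      next
        case False
        then have "u0 B c2 < u0 B c1" using ne by linarith
        then show ?thesis using meet_moving[OF B p2(1) p1(1) _ p1(2)] 4 by (auto simp: colf_def)
      qed
    qed
  qed
  then obtain t where t: "t \<le> 4*B-5" "colf B c1 t div 2 = colf B c2 t div 2" by blast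
  have "share_bus_at B s t (c1,k1) (c2,k2)"
    using share_iff[of t B c1 k1 s c2 k2] t q1 q2 q1e q2e by auto
  then show "\<exists>t\<le>4*B-5. share_bus_at B s t q1 q2" using t q1e q2e by blast
qed

lemma not_full_conn:
  assumes B: "B \<ge> 2" and s: "s \<ge> 2" and L: "L < 4*B-5"
  shows "\<not> full_connectivity B s L"
proof
  assume fc: "full_connectivity B s L"
  have q1: "(2*B-4, 0) \<in> positions B s" and q2: "(2*B-1, 0) \<in> positions B s"
    using B s by (auto simp: positions_def)
  have "(2*B-4, 0::nat) \<noteq> (2*B-1, 0)" using B by auto
  then obtain t where t: "t \<le> L" "share_bus_at B s t (2*B-4, 0) (2*B-1, 0)"
    using fc q1 q2 unfolding full_connectivity_def by blast
  then have "colf B (2*B-4) t div 2 = colf B (2*B-1) t div 2"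
    using share_iff[of t B "2*B-4" 0 s "2*B-1" 0] q1 q2 L by auto
  moreover have "t \<le> 4*B-6" using t L by arith
  ultimately show False using no_meet[OF B, of t] by auto
qed


lemma ceil1: "B \<ge> 1 \<Longrightarrow> \<lceil>real B / real (B + 1)\<rceil> = 1"
  by (rule ceiling_unique) (auto simp: field_simps)

theorem theorem3:
  fixes B s :: nat
  assumes "B \<ge> 1" and "s \<ge> 2" and "even s"
  shows "(LEAST L. full_connectivity B s L)
           = nat ((4 * int B - 5) * \<lceil>real B / real (B + 1)\<rceil>)
         \<and> full_connectivity B s (nat ((4 * int B - 5) * \<lceil>real B / real (B + 1)\<rceil>))"
proof (cases "B = 1")
  case True
  have fc: "full_connectivity B s 0"
    unfolding full_connectivity_def share_bus_at_def using True
    by (auto simp: positions_def bus_of_def)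
  have "nat ((4 * int B - 5) * \<lceil>real B / real (B + 1)\<rceil>) = 0" using True ceil1 by simp
  then show ?thesis using fc by (simp add: Least_eq_0)
next
  case False
  then have B: "B \<ge> 2" using assms by auto
  have e: "nat ((4 * int B - 5) * \<lceil>real B / real (B + 1)\<rceil>) = 4*B-5" using B ceil1[of B] by simp
  have fc: "full_connectivity B s (4*B-5)" using full_conn[OF B] .
  have "(LEAST L. full_connectivity B s L) = 4*B-5"
  proof (rule Least_equality)
    show "full_connectivity B s (4*B-5)" by (rule fc)
  next
    fix y assume "full_connectivity B s y"
    then show "4*B-5 \<le> y" using not_full_conn[OF B assms(2)] by (meson not_le)
  qed
  then show ?thesis using e fc by simp
qed

end
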